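(* Let $V=\{0,1,2,3,4\}$ (so $n=3$), with nominal durations $\bar\theta_1=\bar\theta_2=\bar\theta_3=1$, maximum deviations $\hat\theta_1=\hat\theta_2=\hat\theta_3=1$, $\bar\theta_0=\hat\theta_0=\bar\theta_4=\hat\theta_4=0$, budget $\Gamma=1$, and let $y\in\{0,1\}^{V\times V}$ be given by $y_{ij}=1$ if and only if $(i,j)\in\{(0,1),(1,2),(1,3),(2,4),(3,4)\}$. For $M>0$ consider the mixed-integer program \[ \max\ \sum_{(i,j)\in V^2}\bigl(\bar\theta_i\alpha_{ij}+\hat\theta_i w_{ij}-M(1-y_{ij})\alpha_{ij}\bigr) \] subject to $\sum_{(j,i)\in V^2}\alpha_{ji}-\sum_{(i,j)\in V^2}\alpha_{ij}=0$ for all $j\in V$ (flow conservation: total flow into $j$ equals total flow out of $j$); $\sum_{i\in V}\alpha_{0i}=1$; $\sum_{i\in V}\alpha_{i4}=1$; $w_{ij}\le\delta_i$ and $w_{ij}\le\alpha_{ij}$ for all $(i,j)\in V^2$; $\sum_{i\in V}\delta_i\le\Gamma$; $0\le\delta_i\le1$ for all $i\in V$; $\alpha_{ij}\in\{0,1\}$ and $w_{ij}\ge0$ for all $(i,j)\in V^2$. Then for all sufficiently large $M$, the optimal value of the linear relaxation of this program (obtained by replacing $\alpha_{ij}\in\{0,1\}$ with $\alpha_{ij}\in[0,1]$) is strictly greater than the optimal value of the mixed-integer program itself; in particular the program is not equivalent to its linear relaxation.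
   Context: This program is the linearised adversarial sub-problem of the two-stage robust resource-constrained project scheduling problem: $V=\{0,\dots,n+1\}$ is the set of activities with dummy source $0$ and dummy sink $n+1$, $y_{ij}=1$ indicates that $(i,j)$ is a precedence arc of the (extended) project network, activity $i$ has duration $\bar\theta_i+\delta_i\hat\theta_i$, and an adversary chooses the delay fractions $\delta$ (with budget $\Gamma$) together with a unit flow $\alpha$ from the source to the sink so as to maximise the total duration along the flow. *)

theory Defs
  imports Complex_Main
begin

definition V :: "nat set" where "V = {0..4}"

definition theta_bar :: "nat \<Rightarrow> real" where
  "theta_bar i = (if i \<in> {1,2,3} then 1 else 0)"

definition theta_hat :: "nat \<Rightarrow> real" where
  "theta_hat i = (if i \<in> {1,2,3} then 1 else 0)"

definition Gamma :: real where "Gamma = 1"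

definition y :: "nat \<Rightarrow> nat \<Rightarrow> real" where
  "y i j = (if (i, j) \<in> {(0,1),(1,2),(1,3),(2,4),(3,4)} then 1 else 0)"

definition objective :: "real \<Rightarrow> (nat \<Rightarrow> nat \<Rightarrow> real) \<Rightarrow> (nat \<Rightarrow> nat \<Rightarrow> real) \<Rightarrow> (nat \<Rightarrow> real) \<Rightarrow> real" where
  "objective M \<alpha> w \<delta> =
     (\<Sum>(i, j)\<in>V \<times> V. theta_bar i * \<alpha> i j + theta_hat i * w i j - M * (1 - y i j) * \<alpha> i j)"

definition common_constraints :: "(nat \<Rightarrow> nat \<Rightarrow> real) \<Rightarrow> (nat \<Rightarrow> nat \<Rightarrow> real) \<Rightarrow> (nat \<Rightarrow> real) \<Rightarrow> bool" where
  "common_constraints \<alpha> w \<delta> \<longleftrightarrow>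
     (\<forall>j\<in>V. (\<Sum>i\<in>V. \<alpha> j i) - (\<Sum>i\<in>V. \<alpha> i j) = 0) \<and>
     (\<Sum>i\<in>V. \<alpha> 0 i) = 1 \<and>
     (\<Sum>i\<in>V. \<alpha> i 4) = 1 \<and>
     (\<forall>i\<in>V. \<forall>j\<in>V. w i j \<le> \<delta> i \<and> w i j \<le> \<alpha> i j) \<and>
     (\<Sum>i\<in>V. \<delta> i) \<le> Gamma \<and>
     (\<forall>i\<in>V. 0 \<le> \<delta> i \<and> \<delta> i \<le> 1) \<and>
     (\<forall>i\<in>V. \<forall>j\<in>V. 0 \<le> w i j)"

definition MIP_feasible :: "((nat \<Rightarrow> nat \<Rightarrow> real) \<times> (nat \<Rightarrow> nat \<Rightarrow> real) \<times> (nat \<Rightarrow> real)) set" where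
  "MIP_feasible = {(\<alpha>, w, \<delta>). common_constraints \<alpha> w \<delta> \<and> (\<forall>i\<in>V. \<forall>j\<in>V. \<alpha> i j \<in> {0, 1})}"

definition LP_feasible :: "((nat \<Rightarrow> nat \<Rightarrow> real) \<times> (nat \<Rightarrow> nat \<Rightarrow> real) \<times> (nat \<Rightarrow> real)) set" where
  "LP_feasible = {(\<alpha>, w, \<delta>). common_constraints \<alpha> w \<delta> \<and> (\<forall>i\<in>V. \<forall>j\<in>V. 0 \<le> \<alpha> i j \<and> \<alpha> i j \<le> 1)}"

definition MIP_opt :: "real \<Rightarrow> real" where
  "MIP_opt M = Sup ((\<lambda>(\<alpha>, w, \<delta>). objective M \<alpha> w \<delta>) ` MIP_feasible)"

definition LP_opt :: "real \<Rightarrow> real" where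
  "LP_opt M = Sup ((\<lambda>(\<alpha>, w, \<delta>). objective M \<alpha> w \<delta>) ` LP_feasible)"

end

theory Submission
  imports Defs
begin

lemma sumV: "(\<Sum>i\<in>V. f i) = f 0 + f 1 + f 2 + f 3 + (f 4::real)"
  by (simp add: V_def eval_nat_numeral atLeast0_atMost_Suc add.commute add.left_commute)

lemma sumVV: "(\<Sum>(i,j)\<in>V\<times>V. f i j) = (\<Sum>i\<in>V. \<Sum>j\<in>V. (f i j::real))"
  by (simp add: sum.cartesian_product V_def)

lemma inV: "i \<in> V \<longleftrightarrow> i = 0 \<or> i = 1 \<or> i = 2 \<or> i = 3 \<or> (i::nat) = 4"
  by (auto simp: V_def)

lemma ballV: "(\<forall>i\<in>V. P i) \<longleftrightarrow> P 0 \<and> P 1 \<and> P 2 \<and> P 3 \<and> P 4"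
  by (auto simp: inV)

lemma obj_split: "objective M \<alpha> w \<delta> =
   (\<Sum>(i,j)\<in>V\<times>V. theta_bar i * \<alpha> i j + theta_hat i * w i j)
   - M * (\<Sum>(i,j)\<in>V\<times>V. (1 - y i j) * \<alpha> i j)"
  unfolding objective_def sum_distrib_left sum_subtractf[symmetric]
  by (rule sum.cong) (auto simp: algebra_simps)

lemma wbound:
  fixes \<alpha> w :: "nat \<Rightarrow> nat \<Rightarrow> real" and \<delta> :: "nat \<Rightarrow> real"
  assumes "\<alpha> i j \<in> {0,1}" "w i j \<le> \<delta> i" "w i j \<le> \<alpha> i j"
  shows "w i j \<le> \<delta> i * \<alpha> i j"
  using assms by (cases "\<alpha> i j = 0") simp_all

lemma mip_bound:
  assumes cc: "common_constraints \<alpha> w \<delta>" and bin: "\<forall>i\<in>V. \<forall>j\<in>V. \<alpha> i j \<in> {0, 1}"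
    and M: "M \<ge> 3"
  shows "objective M \<alpha> w \<delta> \<le> 3 - M"
proof -
  define P where "P = (\<Sum>(i,j)\<in>V\<times>V. (1 - y i j) * \<alpha> i j)"
  define A where "A = (\<Sum>j\<in>V. \<alpha> 1 j) + (\<Sum>j\<in>V. \<alpha> 2 j) + (\<Sum>j\<in>V. \<alpha> 3 j)"
  define W where "W = (\<Sum>j\<in>V. w 1 j) + (\<Sum>j\<in>V. w 2 j) + (\<Sum>j\<in>V. w 3 j)"
  have o: "objective M \<alpha> w \<delta> = A + W - M * P"
    unfolding obj_split P_def A_def W_def sumVV sumV
    by (simp add: theta_bar_def theta_hat_def)
  have Pe: "P = \<alpha> 0 0 + \<alpha> 0 2 + \<alpha> 0 3 + \<alpha> 0 4 + \<alpha> 1 0 + \<alpha> 1 1 + \<alpha> 1 4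
     + \<alpha> 2 0 + \<alpha> 2 1 + \<alpha> 2 2 + \<alpha> 2 3 + \<alpha> 3 0 + \<alpha> 3 1 + \<alpha> 3 2 + \<alpha> 3 3
     + \<alpha> 4 0 + \<alpha> 4 1 + \<alpha> 4 2 + \<alpha> 4 3 + \<alpha> 4 4"
    unfolding P_def sumVV sumV by (simp add: y_def)
  have c: "\<forall>j\<in>V. (\<Sum>i\<in>V. \<alpha> j i) - (\<Sum>i\<in>V. \<alpha> i j) = 0"
     "(\<Sum>i\<in>V. \<alpha> 0 i) = 1" "(\<Sum>i\<in>V. \<alpha> i 4) = 1"
     "\<forall>i\<in>V. \<forall>j\<in>V. w i j \<le> \<delta> i \<and> w i j \<le> \<alpha> i j"
     "(\<Sum>i\<in>V. \<delta> i) \<le> Gamma" "\<forall>i\<in>V. 0 \<le> \<delta> i \<and> \<delta> i \<le> 1"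
     "\<forall>i\<in>V. \<forall>j\<in>V. 0 \<le> w i j"
    using cc unfolding common_constraints_def by auto
  have b: "\<forall>i\<in>V. \<forall>j\<in>V. 0 \<le> \<alpha> i j \<and> \<alpha> i j \<le> 1"
  proof (intro ballI)
    fix i j assume "i \<in> V" "j \<in> V"
    then have "\<alpha> i j = 0 \<or> \<alpha> i j = 1" using bin by auto
    then show "0 \<le> \<alpha> i j \<and> \<alpha> i j \<le> 1" by auto
  qed
  have V5: "0 \<in> V" "1 \<in> V" "2 \<in> V" "3 \<in> V" "4 \<in> V" by (simp_all add: V_def)
  have nn: "\<And>i j. i \<in> V \<Longrightarrow> j \<in> V \<Longrightarrow> 0 \<le> \<alpha> i j" using b by blast
  note nns = nn[OF V5(1) V5(1)] nn[OF V5(1) V5(2)] nn[OF V5(1) V5(3)] nn[OF V5(1) V5(4)] nn[OF V5(1) V5(5)] nn[OF V5(2) V5(1)] nn[OF V5(2) V5(2)] nn[OF V5(2) V5(3)] nn[OF V5(2) V5(4)] nn[OF V5(2) V5(5)] nn[OF V5(3) V5(1)] nn[OF V5(3) V5(2)] nn[OF V5(3) V5(3)] nn[OF V5(3) V5(4)] nn[OF V5(3) V5(5)] nn[OF V5(4) V5(1)] nn[OF V5(4) V5(2)] nn[OF V5(4) V5(3)] nn[OF V5(4) V5(4)] nn[OF V5(4) V5(5)] nn[OF V5(5) V5(1)] nn[OF V5(5) V5(2)] nn[OF V5(5) V5(3)] nn[OF V5(5) V5(4)] nn[OF V5(5) V5(5)]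
  have fl0: "\<alpha> 0 0 + \<alpha> 0 1 + \<alpha> 0 2 + \<alpha> 0 3 + \<alpha> 0 4 = \<alpha> 0 0 + \<alpha> 1 0 + \<alpha> 2 0 + \<alpha> 3 0 + \<alpha> 4 0" using c(1) V5(1) by (simp add: sumV)
  have fl1: "\<alpha> 1 0 + \<alpha> 1 1 + \<alpha> 1 2 + \<alpha> 1 3 + \<alpha> 1 4 = \<alpha> 0 1 + \<alpha> 1 1 + \<alpha> 2 1 + \<alpha> 3 1 + \<alpha> 4 1" using c(1) V5(2) by (simp add: sumV)
  have fl2: "\<alpha> 2 0 + \<alpha> 2 1 + \<alpha> 2 2 + \<alpha> 2 3 + \<alpha> 2 4 = \<alpha> 0 2 + \<alpha> 1 2 + \<alpha> 2 2 + \<alpha> 3 2 + \<alpha> 4 2" using c(1) V5(3) by (simp add: sumV)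
  have fl3: "\<alpha> 3 0 + \<alpha> 3 1 + \<alpha> 3 2 + \<alpha> 3 3 + \<alpha> 3 4 = \<alpha> 0 3 + \<alpha> 1 3 + \<alpha> 2 3 + \<alpha> 3 3 + \<alpha> 4 3" using c(1) V5(4) by (simp add: sumV)
  have fl4: "\<alpha> 4 0 + \<alpha> 4 1 + \<alpha> 4 2 + \<alpha> 4 3 + \<alpha> 4 4 = \<alpha> 0 4 + \<alpha> 1 4 + \<alpha> 2 4 + \<alpha> 3 4 + \<alpha> 4 4" using c(1) V5(5) by (simp add: sumV)
  have src: "\<alpha> 0 0 + \<alpha> 0 1 + \<alpha> 0 2 + \<alpha> 0 3 + \<alpha> 0 4 = 1" using c(2) by (simp add: sumV)
  define o1 where "o1 = (\<Sum>j\<in>V. \<alpha> 1 j)"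
  define o2 where "o2 = (\<Sum>j\<in>V. \<alpha> 2 j)"
  define o3 where "o3 = (\<Sum>j\<in>V. \<alpha> 3 j)"
  have P1: "P \<ge> 1" using fl0 src nns unfolding Pe by argo
  have h1: "\<alpha> 1 2 + \<alpha> 1 3 \<le> (\<alpha> 0 1 + \<alpha> 1 1 + \<alpha> 2 1 + \<alpha> 3 1 + \<alpha> 4 1)" using fl1 nns by linarith
  have h2: "\<alpha> 0 1 \<le> (\<alpha> 0 0 + \<alpha> 1 0 + \<alpha> 2 0 + \<alpha> 3 0 + \<alpha> 4 0)" using fl0 src nns by linarith
  have A2: "A \<le> 2 * P" using h1 h2 fl1 fl2 fl3 nns unfolding Pe A_def sumV by argo
  have op1: "o1 \<le> P" using fl0 fl1 src nns unfolding Pe o1_def sumV by argo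
  have op2: "o2 \<le> P" using h1 h2 fl1 fl2 nns unfolding Pe o2_def sumV by argo
  have op3: "o3 \<le> P" using h1 h2 fl1 fl3 nns unfolding Pe o3_def sumV by argo
  note op = op1 op2 op3
  have wi: "(\<Sum>j\<in>V. w i j) \<le> \<delta> i * (\<Sum>j\<in>V. \<alpha> i j)" if "i \<in> V" for i
    unfolding sum_distrib_left
    by (rule sum_mono) (use that bin c(4) in \<open>auto intro!: wbound\<close>)
  have d: "0 \<le> \<delta> 1" "0 \<le> \<delta> 2" "0 \<le> \<delta> 3" "\<delta> 1 + \<delta> 2 + \<delta> 3 \<le> 1"
  proof -
    have "0 \<le> \<delta> 0" "0 \<le> \<delta> 1" "0 \<le> \<delta> 2" "0 \<le> \<delta> 3" "0 \<le> \<delta> 4"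
      using c(6) V5 by auto
    moreover have "\<delta> 0 + \<delta> 1 + \<delta> 2 + \<delta> 3 + \<delta> 4 \<le> 1" using c(5) by (simp add: sumV Gamma_def)
    ultimately show "0 \<le> \<delta> 1" "0 \<le> \<delta> 2" "0 \<le> \<delta> 3" "\<delta> 1 + \<delta> 2 + \<delta> 3 \<le> 1"
      by linarith+
  qed
  have "W \<le> \<delta> 1 * o1 + \<delta> 2 * o2 + \<delta> 3 * o3"
    unfolding W_def o1_def o2_def o3_def using wi[of 1] wi[of 2] wi[of 3] by (simp add: V_def)
  also have "\<dots> \<le> \<delta> 1 * P + \<delta> 2 * P + \<delta> 3 * P"
    using op d by (intro add_mono mult_left_mono) auto
  also have "\<dots> = (\<delta> 1 + \<delta> 2 + \<delta> 3) * P" by (simp add: algebra_simps)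
  also have "\<dots> \<le> P" using d P1 by (simp add: mult_left_le_one_le)
  finally have WP: "W \<le> P" .
  have "A + W - M * P \<le> (3 - M) * P" using A2 WP by (simp add: algebra_simps)
  also have "\<dots> \<le> (3 - M) * 1" using M P1 by (intro mult_left_mono_neg) auto
  finally show ?thesis using o by simp
qed

lemma obj_le50:
  assumes "(\<alpha>, w, \<delta>) \<in> LP_feasible" "M > 0"
  shows "objective M \<alpha> w \<delta> \<le> 50"
proof -
  have t: "theta_bar i * \<alpha> i j + theta_hat i * w i j - M * (1 - y i j) * \<alpha> i j \<le> 2"
    if "(i,j) \<in> V \<times> V" for i j
  proof -
    have a: "0 \<le> \<alpha> i j" "\<alpha> i j \<le> 1" "w i j \<le> \<alpha> i j" "0 \<le> w i j"
      using assms(1) that unfolding LP_feasible_def common_constraints_def by auto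
    have "M * (1 - y i j) * \<alpha> i j \<ge> 0" using assms(2) a by (simp add: y_def)
    moreover have "theta_bar i * \<alpha> i j \<le> 1" "theta_hat i * w i j \<le> 1"
      using a by (auto simp: theta_bar_def theta_hat_def)
    ultimately show ?thesis by linarith
  qed
  have "objective M \<alpha> w \<delta> \<le> (\<Sum>(i,j)\<in>V\<times>V. (2::real))"
    unfolding objective_def by (rule sum_mono) (use t in auto)
  also have "\<dots> = 50" by (simp add: V_def)
  finally show ?thesis .
qed

definition aLP :: "nat \<Rightarrow> nat \<Rightarrow> real" where
  "aLP i j = (if (i,j) = (0,1) \<or> (i,j) = (4,0) then 1
     else if (i,j) \<in> {(1,2),(1,3),(2,4),(3,4)} then 1/2 else 0)"
definition wLP :: "nat \<Rightarrow> nat \<Rightarrow> real" where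
  "wLP i j = (if (i,j) \<in> {(1,2),(1,3)} then 1/2 else if (i,j) \<in> {(2,4),(3,4)} then 1/4 else 0)"
definition dLP :: "nat \<Rightarrow> real" where
  "dLP i = (if i = 1 then 1/2 else if i \<in> {2,3} then 1/4 else 0)"

definition aM :: "nat \<Rightarrow> nat \<Rightarrow> real" where
  "aM i j = (if (i,j) \<in> {(0,1),(1,2),(2,4),(4,0)} then 1 else 0)"

lemma LP_pt: "(aLP, wLP, dLP) \<in> LP_feasible"
  unfolding LP_feasible_def common_constraints_def
  by (simp add: sumV inV aLP_def wLP_def dLP_def Gamma_def)

lemma LP_val: "objective M aLP wLP dLP = 7/2 - M"
  unfolding objective_def sumVV sumV
  by (simp add: aLP_def wLP_def theta_bar_def theta_hat_def y_def)

lemma MIP_pt: "(aM, \<lambda>i j. 0, \<lambda>i. 0) \<in> MIP_feasible"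
  unfolding MIP_feasible_def common_constraints_def
  by (simp add: sumV inV aM_def Gamma_def)

theorem mainTheorem1:
  shows "\<exists>M0::real. \<forall>M. M > 0 \<and> M \<ge> M0 \<longrightarrow> LP_opt M > MIP_opt M"
proof (intro exI[of _ 3] allI impI)
  fix M :: real assume M: "M > 0 \<and> M \<ge> 3"
  have "MIP_opt M \<le> 3 - M"
    unfolding MIP_opt_def
  proof (rule cSup_least)
    show "(\<lambda>(\<alpha>, w, \<delta>). objective M \<alpha> w \<delta>) ` MIP_feasible \<noteq> {}" using MIP_pt by blast
  next
    fix x assume "x \<in> (\<lambda>(\<alpha>, w, \<delta>). objective M \<alpha> w \<delta>) ` MIP_feasible"
    then show "x \<le> 3 - M" using mip_bound M unfolding MIP_feasible_def by auto
  qed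
  moreover have "7/2 - M \<le> LP_opt M"
    unfolding LP_opt_def
  proof (rule cSup_upper)
    show "7/2 - M \<in> (\<lambda>(\<alpha>, w, \<delta>). objective M \<alpha> w \<delta>) ` LP_feasible"
      by (rule image_eqI[where x="(aLP,wLP,dLP)"]) (use LP_pt LP_val in auto)
    show "bdd_above ((\<lambda>(\<alpha>, w, \<delta>). objective M \<alpha> w \<delta>) ` LP_feasible)"
      unfolding bdd_above_def by (rule exI[of _ 50]) (use obj_le50 M in auto)
  qed
  ultimately show "LP_opt M > MIP_opt M" by linarith
qed

end
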